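(* Let $\mathsf{Prop}$ be a non-empty finite set of propositions and $\mathsf{L}$ any fragment of $\mathsf{LTL}_P(\mathsf{Prop})$. For every sample $\mathcal{S}=(\mathcal{P},\mathcal{N})$ of Kripke structures in $\mathcal{T}(\mathsf{Prop})$, if there is an $\mathcal{S}$-separating $\mathsf{L}$-formula, then there is one of size at most $2^{n+1}$, where $n:=\sum_{K\in\mathcal{P}\cup\mathcal{N}}|Q_K|$.
   Context: $\mathsf{LTL}$-formulas over $\mathsf{Prop}$ are interpreted on infinite words $w$ over $2^{\mathsf{Prop}}$: $w\models p$ iff $p\in w[0]$; Boolean connectives as usual; $w\models\mathbf{X}\varphi$ iff $w[1:]\models\varphi$; $w\models\mathbf{F}\varphi$ iff $\exists j$, $w[j:]\models\varphi$; $w\models\mathbf{G}\varphi$ iff $\forall j$, $w[j:]\models\varphi$; $w\models\varphi_1\mathbf{U}\varphi_2$ iff $\exists j$, $w[j:]\models\varphi_2$ and $\forall k<j$, $w[k:]\models\varphi_1$. $\mathsf{LTL}_P(\mathsf{Prop})$ is the two-sorted logic (both sorts final) with grammar $\varphi_P::=p\mid\neg\varphi_P\mid\varphi_P\wedge\varphi_P\mid\varphi_P\vee\varphi_P$ and $\varphi::=\varphi_P\mid\varphi\wedge\varphi\mid\varphi_P\vee\varphi\mid\mathbf{X}\varphi\mid\mathbf{G}\varphi\mid\mathbf{F}\varphi_P\mid\varphi\,\mathbf{U}\,\varphi_P$; its formulas are read as $\mathsf{LTL}$-formulas. Its operators are the propositions, the sort-$P$ operators $\neg,\wedge,\vee$,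 and the general-sort operators $\wedge$, $\vee$ (left argument of sort $P$), $\mathbf{X},\mathbf{G},\mathbf{F}$ (argument of sort $P$), $\mathbf{U}$ (right argument of sort $P$); every sort-$P$ formula may be used where a general-sort formula is expected. A fragment is obtained by allowing only a subset of these operators. $\mathsf{sz}(\varphi)$ is the number of distinct subformulas. $\mathcal{T}(\mathsf{Prop})$: Kripke structures $K=(Q,I,\delta,P,\pi)$ with $Q=Q_K$ finite non-empty, $I\subseteq Q$ non-empty, $\delta:Q\to2^Q$ with $\delta(q)\ne\emptyset$ for all $q$, $P\subseteq\mathsf{Prop}$, $\pi:Q\to2^P$. $\mathsf{Paths}(q)$: infinite $\rho\in q\cdot Q^\omega$ with $\rho[i+1]\in\delta(\rho[i])$, read as the word $\pi(\rho[0])\pi(\rho[1])\cdots$. A state $q$ satisfies $\varphi$ if all $\rho\in\mathsf{Paths}(q)$ satisfy $\varphi$; $K\models\varphi$ if all $q\in I$ satisfy $\varphi$. A sample is a pair of finite sets of such structures; a formula is $\mathcal{S}$-separating if satisfied by all structures in $\mathcal{P}$ and by none in $\mathcal{N}$. *)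

theory Defs
  imports Main
begin

datatype 'p ltl =
    LAtom 'p
  | LNot "'p ltl"
  | LAnd "'p ltl" "'p ltl"
  | LOr "'p ltl" "'p ltl"
  | LX "'p ltl"
  | LF "'p ltl"
  | LG "'p ltl"
  | LU "'p ltl" "'p ltl"

type_synonym 'p word = "nat \<Rightarrow> 'p set"

definition suffix :: "'p word \<Rightarrow> nat \<Rightarrow> 'p word" where
  "suffix w j = (\<lambda>i. w (j + i))"

fun ltl_sat :: "'p word \<Rightarrow> 'p ltl \<Rightarrow> bool" where
  "ltl_sat w (LAtom p) = (p \<in> w 0)"
| "ltl_sat w (LNot \<phi>) = (\<not> ltl_sat w \<phi>)"
| "ltl_sat w (LAnd \<phi> \<psi>) = (ltl_sat w \<phi> \<and> ltl_sat w \<psi>)"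
| "ltl_sat w (LOr \<phi> \<psi>) = (ltl_sat w \<phi> \<or> ltl_sat w \<psi>)"
| "ltl_sat w (LX \<phi>) = ltl_sat (suffix w 1) \<phi>"
| "ltl_sat w (LF \<phi>) = (\<exists>j. ltl_sat (suffix w j) \<phi>)"
| "ltl_sat w (LG \<phi>) = (\<forall>j. ltl_sat (suffix w j) \<phi>)"
| "ltl_sat w (LU \<phi> \<psi>) =
     (\<exists>j. ltl_sat (suffix w j) \<psi> \<and> (\<forall>k<j. ltl_sat (suffix w k) \<phi>))"

text \<open>Sort-P formulas may be used where a
  general formula is expected (implicit coercion, no extra node).\<close>

datatype 'p ltlp =
    PAtom 'p
  | PNot "'p ltlp"
  | PAnd "'p ltlp" "'p ltlp"
  | POr "'p ltlp" "'p ltlp"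
  | GAnd "'p ltlp" "'p ltlp"
  | GOr "'p ltlp" "'p ltlp"
  | GX "'p ltlp"
  | GG "'p ltlp"
  | GF "'p ltlp"
  | GU "'p ltlp" "'p ltlp"

datatype 'p ltlp_op =
    OProp 'p | ONot | OPAnd | OPOr | OAnd | OOr | OX | OG | OF | OU

definition ltlp_ops :: "'p set \<Rightarrow> 'p ltlp_op set" where
  "ltlp_ops Prop = OProp ` Prop \<union> {ONot, OPAnd, OPOr, OAnd, OOr, OX, OG, OF, OU}"

fun is_P_formula :: "'p set \<Rightarrow> 'p ltlp_op set \<Rightarrow> 'p ltlp \<Rightarrow> bool" where
  "is_P_formula Prop L (PAtom p) = (p \<in> Prop \<and> OProp p \<in> L)"
| "is_P_formula Prop L (PNot \<phi>) = (ONot \<in> L \<and> is_P_formula Prop L \<phi>)"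
| "is_P_formula Prop L (PAnd \<phi> \<psi>) = (OPAnd \<in> L \<and> is_P_formula Prop L \<phi> \<and> is_P_formula Prop L \<psi>)"
| "is_P_formula Prop L (POr \<phi> \<psi>) = (OPOr \<in> L \<and> is_P_formula Prop L \<phi> \<and> is_P_formula Prop L \<psi>)"
| "is_P_formula Prop L _ = False"

fun is_G_formula :: "'p set \<Rightarrow> 'p ltlp_op set \<Rightarrow> 'p ltlp \<Rightarrow> bool" where
  "is_G_formula Prop L (GAnd \<phi> \<psi>) = (OAnd \<in> L \<and> is_G_formula Prop L \<phi> \<and> is_G_formula Prop L \<psi>)"
| "is_G_formula Prop L (GOr \<phi> \<psi>) = (OOr \<in> L \<and> is_P_formula Prop L \<phi> \<and> is_G_formula Prop L \<psi>)"
| "is_G_formula Prop L (GX \<phi>) = (OX \<in> L \<and> is_G_formula Prop L \<phi>)"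
| "is_G_formula Prop L (GG \<phi>) = (OG \<in> L \<and> is_G_formula Prop L \<phi>)"
| "is_G_formula Prop L (GF \<phi>) = (OF \<in> L \<and> is_P_formula Prop L \<phi>)"
| "is_G_formula Prop L (GU \<phi> \<psi>) = (OU \<in> L \<and> is_G_formula Prop L \<phi> \<and> is_P_formula Prop L \<psi>)"
| "is_G_formula Prop L \<phi> = is_P_formula Prop L \<phi>"

text \<open>Both sorts are final: an L-formula is a formula of either sort
  (every sort-P formula is also of the general sort).\<close>
definition is_L_formula :: "'p set \<Rightarrow> 'p ltlp_op set \<Rightarrow> 'p ltlp \<Rightarrow> bool" where
  "is_L_formula Prop L \<phi> = is_G_formula Prop L \<phi>"

fun read_ltl :: "'p ltlp \<Rightarrow> 'p ltl" where
  "read_ltl (PAtom p) = LAtom p"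
| "read_ltl (PNot \<phi>) = LNot (read_ltl \<phi>)"
| "read_ltl (PAnd \<phi> \<psi>) = LAnd (read_ltl \<phi>) (read_ltl \<psi>)"
| "read_ltl (POr \<phi> \<psi>) = LOr (read_ltl \<phi>) (read_ltl \<psi>)"
| "read_ltl (GAnd \<phi> \<psi>) = LAnd (read_ltl \<phi>) (read_ltl \<psi>)"
| "read_ltl (GOr \<phi> \<psi>) = LOr (read_ltl \<phi>) (read_ltl \<psi>)"
| "read_ltl (GX \<phi>) = LX (read_ltl \<phi>)"
| "read_ltl (GG \<phi>) = LG (read_ltl \<phi>)"
| "read_ltl (GF \<phi>) = LF (read_ltl \<phi>)"
| "read_ltl (GU \<phi> \<psi>) = LU (read_ltl \<phi>) (read_ltl \<psi>)"

fun subformulas :: "'p ltlp \<Rightarrow> 'p ltlp set" where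
  "subformulas (PAtom p) = {PAtom p}"
| "subformulas (PNot \<phi>) = insert (PNot \<phi>) (subformulas \<phi>)"
| "subformulas (PAnd \<phi> \<psi>) = insert (PAnd \<phi> \<psi>) (subformulas \<phi> \<union> subformulas \<psi>)"
| "subformulas (POr \<phi> \<psi>) = insert (POr \<phi> \<psi>) (subformulas \<phi> \<union> subformulas \<psi>)"
| "subformulas (GAnd \<phi> \<psi>) = insert (GAnd \<phi> \<psi>) (subformulas \<phi> \<union> subformulas \<psi>)"
| "subformulas (GOr \<phi> \<psi>) = insert (GOr \<phi> \<psi>) (subformulas \<phi> \<union> subformulas \<psi>)"
| "subformulas (GX \<phi>) = insert (GX \<phi>) (subformulas \<phi>)"
| "subformulas (GG \<phi>) = insert (GG \<phi>) (subformulas \<phi>)"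
| "subformulas (GF \<phi>) = insert (GF \<phi>) (subformulas \<phi>)"
| "subformulas (GU \<phi> \<psi>) = insert (GU \<phi> \<psi>) (subformulas \<phi> \<union> subformulas \<psi>)"

definition sz :: "'p ltlp \<Rightarrow> nat" where
  "sz \<phi> = card (subformulas \<phi>)"

record ('s, 'p) kripke =
  states :: "'s set"
  init :: "'s set"
  trans :: "'s \<Rightarrow> 's set"
  props :: "'p set"
  lab :: "'s \<Rightarrow> 'p set"

definition in_T :: "'p set \<Rightarrow> ('s, 'p) kripke \<Rightarrow> bool" where
  "in_T Prop K \<longleftrightarrow>
     finite (states K) \<and> states K \<noteq> {} \<and>
     init K \<subseteq> states K \<and> init K \<noteq> {} \<and>
     (\<forall>q\<in>states K. trans K q \<subseteq> states K \<and> trans K q \<noteq> {}) \<and>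
     props K \<subseteq> Prop \<and>
     (\<forall>q\<in>states K. lab K q \<subseteq> props K)"

definition paths :: "('s, 'p) kripke \<Rightarrow> 's \<Rightarrow> (nat \<Rightarrow> 's) set" where
  "paths K q = {\<rho>. \<rho> 0 = q \<and> (\<forall>i. \<rho> (Suc i) \<in> trans K (\<rho> i))}"

definition path_word :: "('s, 'p) kripke \<Rightarrow> (nat \<Rightarrow> 's) \<Rightarrow> 'p word" where
  "path_word K \<rho> = (\<lambda>i. lab K (\<rho> i))"

definition state_sat :: "('s, 'p) kripke \<Rightarrow> 's \<Rightarrow> 'p ltl \<Rightarrow> bool" where
  "state_sat K q \<phi> \<longleftrightarrow> (\<forall>\<rho>\<in>paths K q. ltl_sat (path_word K \<rho>) \<phi>)"

definition kripke_sat :: "('s, 'p) kripke \<Rightarrow> 'p ltl \<Rightarrow> bool" where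
  "kripke_sat K \<phi> \<longleftrightarrow> (\<forall>q\<in>init K. state_sat K q \<phi>)"

definition separating :: "('s, 'p) kripke set \<Rightarrow> ('s, 'p) kripke set \<Rightarrow> 'p ltlp \<Rightarrow> bool" where
  "separating Pos Neg \<phi> \<longleftrightarrow>
     (\<forall>K\<in>Pos. kripke_sat K (read_ltl \<phi>)) \<and> (\<forall>K\<in>Neg. \<not> kripke_sat K (read_ltl \<phi>))"

end

theory Submission
  imports Defs "HOL-Library.FuncSet"
begin

fun lprop :: "'p ltl \<Rightarrow> bool" where
  "lprop (LAtom p) = True"
| "lprop (LNot f) = lprop f"
| "lprop (LAnd f g) = (lprop f \<and> lprop g)"
| "lprop (LOr f g) = (lprop f \<and> lprop g)"
| "lprop _ = False"

lemma isP_lprop: "is_P_formula Prop L a \<Longrightarrow> lprop (read_ltl a)"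
  by (induction a) auto

lemma isP_isG: "is_P_formula Prop L a \<Longrightarrow> is_G_formula Prop L a"
  by (cases a) auto

definition wfk :: "('s, 'p) kripke \<Rightarrow> bool" where
  "wfk K \<longleftrightarrow> (\<forall>q\<in>states K. trans K q \<subseteq> states K \<and> trans K q \<noteq> {})"

lemma inT_wfk: "in_T Prop K \<Longrightarrow> wfk K"
  unfolding in_T_def wfk_def by blast

lemma path_in: "wfk K \<Longrightarrow> q \<in> states K \<Longrightarrow> \<rho> \<in> paths K q \<Longrightarrow> \<rho> j \<in> states K"
  by (induction j) (auto simp: paths_def wfk_def)

lemma path_ex:
  assumes "wfk K" "q \<in> states K" shows "\<exists>\<rho>. \<rho> \<in> paths K q"
proof -
  define \<rho> where "\<rho> = rec_nat q (\<lambda>_ r. SOME r'. r' \<in> trans K r)"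
  have "\<rho> i \<in> states K \<and> \<rho> (Suc i) \<in> trans K (\<rho> i)" for i
  proof (induction i)
    case 0
    have "\<rho> 0 = q" by (simp add: \<rho>_def)
    then show ?case using assms by (auto simp: \<rho>_def wfk_def some_in_eq)
  next
    case (Suc i)
    then have "\<rho> (Suc i) \<in> states K" using assms unfolding wfk_def by blast
    then show ?case using assms by (auto simp: \<rho>_def wfk_def some_in_eq)
  qed
  moreover have "\<rho> 0 = q" by (simp add: \<rho>_def)
  ultimately have "\<rho> \<in> paths K q" unfolding paths_def by blast
  then show ?thesis by blast
qed

lemma path_suffix: "\<rho> \<in> paths K q \<Longrightarrow> (\<lambda>i. \<rho> (j+i)) \<in> paths K (\<rho> j)"
  by (auto simp: paths_def)

lemma suffix_pw: "suffix (path_word K \<rho>) j = path_word K (\<lambda>i. \<rho> (j+i))"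
  by (simp add: suffix_def path_word_def)

lemma splice_path:
  assumes "\<rho> \<in> paths K q" "\<sigma> \<in> paths K (\<rho> k)"
  shows "(\<lambda>i. if i \<le> k then \<rho> i else \<sigma> (i-k)) \<in> paths K q"
  unfolding paths_def
proof (intro CollectI conjI allI)
  show "(if 0 \<le> k then \<rho> 0 else \<sigma> (0 - k)) = q" using assms by (simp add: paths_def)
  fix i
  have r: "\<rho> (Suc i) \<in> trans K (\<rho> i)" and s0: "\<sigma> 0 = \<rho> k" and s: "\<And>i. \<sigma> (Suc i) \<in> trans K (\<sigma> i)"
    using assms by (auto simp: paths_def)
  consider "Suc i \<le> k" | "i = k" | "k < i" by linarith
  then show "(if Suc i \<le> k then \<rho> (Suc i) else \<sigma> (Suc i - k)) \<in> trans K (if i \<le> k then \<rho> i else \<sigma> (i - k))"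
  proof cases
    case 1 then show ?thesis using r by simp
  next
    case 2 then show ?thesis using s[of 0] s0 by simp
  next
    case 3
    then have "Suc i - k = Suc (i - k)" by simp
    then show ?thesis using 3 s[of "i-k"] by simp
  qed
qed

lemma splice_suffix: "(\<lambda>i. (\<lambda>i. if i \<le> (k::nat) then \<rho> i else \<sigma> (i-k)) (k+i)) = \<sigma>"
  if "\<sigma> 0 = \<rho> k"
proof
  fix i show "(\<lambda>i. if i \<le> k then \<rho> i else \<sigma> (i-k)) (k+i) = \<sigma> i"
    using that by (cases "i = 0") auto
qed

lemma lprop_indep: "lprop f \<Longrightarrow> w 0 = w' 0 \<Longrightarrow> ltl_sat w f = ltl_sat w' f"
  by (induction f) auto

lemma P_state: "lprop f \<Longrightarrow> \<rho> \<in> paths K q \<Longrightarrow> state_sat K q f = ltl_sat (path_word K \<rho>) f"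
proof -
  assume l: "lprop f" and r: "\<rho> \<in> paths K q"
  have "ltl_sat (path_word K \<sigma>) f = ltl_sat (path_word K \<rho>) f" if "\<sigma> \<in> paths K q" for \<sigma>
  proof (rule lprop_indep[OF l])
    show "path_word K \<sigma> 0 = path_word K \<rho> 0" using that r by (simp add: paths_def path_word_def)
  qed
  then show ?thesis using r unfolding state_sat_def by blast
qed

lemma sat_step: "\<rho> \<in> paths K q \<Longrightarrow> state_sat K (\<rho> j) f \<Longrightarrow> ltl_sat (suffix (path_word K \<rho>) j) f"
proof -
  assume r: "\<rho> \<in> paths K q" and s: "state_sat K (\<rho> j) f"
  show ?thesis unfolding suffix_pw using bspec[OF s[unfolded state_sat_def] path_suffix[OF r]] .
qed

lemma sat_stepP: "lprop f \<Longrightarrow> \<rho> \<in> paths K q \<Longrightarrow> ltl_sat (suffix (path_word K \<rho>) j) f = state_sat K (\<rho> j) f"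
proof -
  assume l: "lprop f" and r: "\<rho> \<in> paths K q"
  show ?thesis unfolding suffix_pw using P_state[OF l path_suffix[OF r, of j]] by simp
qed

lemma sat_Not: "lprop f \<Longrightarrow> \<rho> \<in> paths K q \<Longrightarrow> state_sat K q (LNot f) = (\<not> state_sat K q f)"
proof -
  assume a: "lprop f" "\<rho> \<in> paths K q"
  have "state_sat K q (LNot f) = (\<not> ltl_sat (path_word K \<rho>) f)" using P_state[of "LNot f", OF _ a(2)] a(1) by simp
  moreover have "state_sat K q f = ltl_sat (path_word K \<rho>) f" using P_state[OF a] .
  ultimately show ?thesis by simp
qed

lemma sat_And: "state_sat K q (LAnd f g) = (state_sat K q f \<and> state_sat K q g)"
  unfolding state_sat_def by auto

lemma sat_Or: assumes "lprop f" shows "state_sat K q (LOr f g) = (state_sat K q f \<or> state_sat K q g)"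
proof -
  have e: "\<And>\<sigma>. \<sigma>\<in>paths K q \<Longrightarrow> ltl_sat (path_word K \<sigma>) f = state_sat K q f" by (rule P_state[OF assms, THEN sym])
  show ?thesis
  proof
    assume H: "state_sat K q (LOr f g)"
    show "state_sat K q f \<or> state_sat K q g"
    proof (cases "state_sat K q f")
      case True then show ?thesis by simp
    next
      case False note n = this
      have "state_sat K q g" unfolding state_sat_def
      proof
        fix \<sigma> assume s: "\<sigma>\<in>paths K q"
        from H s have "ltl_sat (path_word K \<sigma>) (LOr f g)" unfolding state_sat_def by blast
        moreover have "\<not> ltl_sat (path_word K \<sigma>) f" using e[OF s] n by simp
        ultimately show "ltl_sat (path_word K \<sigma>) g" by simp
      qed
      then show ?thesis by simp
    qed
  next
    assume H: "state_sat K q f \<or> state_sat K q g"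
    show "state_sat K q (LOr f g)" unfolding state_sat_def[of K q "LOr f g"]
    proof
      fix \<sigma> assume s: "\<sigma>\<in>paths K q"
      from H show "ltl_sat (path_word K \<sigma>) (LOr f g)"
      proof
        assume "state_sat K q f" then show ?thesis using e[OF s] by simp
      next
        assume "state_sat K q g" then have "ltl_sat (path_word K \<sigma>) g" using s unfolding state_sat_def by blast
        then show ?thesis by simp
      qed
    qed
  qed
qed

lemma sat_X: "state_sat K q (LX f) = (\<forall>\<rho>\<in>paths K q. state_sat K (\<rho> 1) f)"
proof
  assume H: "state_sat K q (LX f)"
  show "\<forall>\<rho>\<in>paths K q. state_sat K (\<rho> 1) f"
  proof (intro ballI)
    fix \<rho> assume r: "\<rho> \<in> paths K q"
    show "state_sat K (\<rho> 1) f" unfolding state_sat_def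
    proof
      fix \<sigma> assume s: "\<sigma> \<in> paths K (\<rho> 1)"
      let ?r = "\<lambda>i. if i \<le> 1 then \<rho> i else \<sigma> (i-1)"
      have "?r \<in> paths K q" using splice_path[OF r s] .
      then have "ltl_sat (suffix (path_word K ?r) 1) f" using H unfolding state_sat_def by auto
      moreover have "\<sigma> 0 = \<rho> 1" using s by (simp add: paths_def)
      ultimately show "ltl_sat (path_word K \<sigma>) f" unfolding suffix_pw using splice_suffix[of \<sigma> \<rho> 1]
        by simp
    qed
  qed
next
  assume "\<forall>\<rho>\<in>paths K q. state_sat K (\<rho> 1) f"
  then show "state_sat K q (LX f)" using sat_step[of _ K q 1 f] unfolding state_sat_def[of K q] by auto
qed

lemma sat_G: "state_sat K q (LG f) = (\<forall>\<rho>\<in>paths K q. \<forall>j. state_sat K (\<rho> j) f)"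
proof
  assume H: "state_sat K q (LG f)"
  show "\<forall>\<rho>\<in>paths K q. \<forall>j. state_sat K (\<rho> j) f"
  proof (intro ballI allI)
    fix \<rho> j assume r: "\<rho> \<in> paths K q"
    show "state_sat K (\<rho> j) f" unfolding state_sat_def
    proof
      fix \<sigma> assume s: "\<sigma> \<in> paths K (\<rho> j)"
      let ?r = "\<lambda>i. if i \<le> j then \<rho> i else \<sigma> (i-j)"
      have "?r \<in> paths K q" using splice_path[OF r s] .
      then have "ltl_sat (suffix (path_word K ?r) j) f" using H unfolding state_sat_def by auto
      moreover have "\<sigma> 0 = \<rho> j" using s by (simp add: paths_def)
      ultimately show "ltl_sat (path_word K \<sigma>) f" unfolding suffix_pw using splice_suffix[of \<sigma> \<rho> j]
        by simp
    qed
  qed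
next
  assume "\<forall>\<rho>\<in>paths K q. \<forall>j. state_sat K (\<rho> j) f"
  then show "state_sat K q (LG f)" using sat_step[of _ K q _ f] unfolding state_sat_def[of K q] by auto
qed

lemma sat_F: "lprop f \<Longrightarrow> state_sat K q (LF f) = (\<forall>\<rho>\<in>paths K q. \<exists>j. state_sat K (\<rho> j) f)"
  using sat_stepP[of f _ K q] unfolding state_sat_def[of K q] by auto

lemma sat_U: assumes g: "lprop g"
  shows "state_sat K q (LU f g) = (\<forall>\<rho>\<in>paths K q. \<exists>j. state_sat K (\<rho> j) g \<and> (\<forall>k<j. state_sat K (\<rho> k) f))"
proof
  assume H: "state_sat K q (LU f g)"
  show "\<forall>\<rho>\<in>paths K q. \<exists>j. state_sat K (\<rho> j) g \<and> (\<forall>k<j. state_sat K (\<rho> k) f)"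
  proof (rule ballI, rule ccontr)
    fix \<rho> assume r: "\<rho> \<in> paths K q"
      and N: "\<not> (\<exists>j. state_sat K (\<rho> j) g \<and> (\<forall>k<j. state_sat K (\<rho> k) f))"
    from H r obtain j where "state_sat K (\<rho> j) g"
      unfolding state_sat_def[of K q] using sat_stepP[OF g r] by auto
    define j0 where "j0 = (LEAST j. state_sat K (\<rho> j) g)"
    have j0: "state_sat K (\<rho> j0) g" unfolding j0_def by (rule LeastI) fact
    have j0min: "\<And>j. state_sat K (\<rho> j) g \<Longrightarrow> j0 \<le> j" unfolding j0_def by (rule Least_le)
    from N j0 obtain k where k: "k < j0" "\<not> state_sat K (\<rho> k) f" by auto
    then obtain \<sigma> where s: "\<sigma> \<in> paths K (\<rho> k)" "\<not> ltl_sat (path_word K \<sigma>) f"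
      unfolding state_sat_def by auto
    let ?r = "\<lambda>i. if i \<le> k then \<rho> i else \<sigma> (i-k)"
    have r': "?r \<in> paths K q" using splice_path[OF r s(1)] .
    have s0: "\<sigma> 0 = \<rho> k" using s by (simp add: paths_def)
    from H r' obtain j' where j': "state_sat K (?r j') g" "\<forall>k'<j'. ltl_sat (suffix (path_word K ?r) k') f"
      unfolding state_sat_def[of K q] using sat_stepP[OF g r'] by auto
    show False
    proof (cases "j' \<le> k")
      case True
      then have "state_sat K (\<rho> j') g" using j' by simp
      then show False using j0min True k by fastforce
    next
      case False
      then have "ltl_sat (suffix (path_word K ?r) k) f" using j' by simp
      then show False using s splice_suffix[of \<sigma> \<rho> k, OF s0] unfolding suffix_pw by simp
    qed
  qed
next
  assume H: "\<forall>\<rho>\<in>paths K q. \<exists>j. state_sat K (\<rho> j) g \<and> (\<forall>k<j. state_sat K (\<rho> k) f)"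
  show "state_sat K q (LU f g)" unfolding state_sat_def[of K q]
  proof
    fix \<rho> assume r: "\<rho> \<in> paths K q"
    then obtain j where "state_sat K (\<rho> j) g" "\<forall>k<j. state_sat K (\<rho> k) f" using H by blast
    then show "ltl_sat (path_word K \<rho>) (LU f g)"
      using sat_stepP[OF g r] sat_step[OF r] by auto
  qed
qed


definition val :: "'p set \<Rightarrow> 'p ltlp_op set \<Rightarrow> ('s,'p) kripke set \<Rightarrow> 'p ltlp \<Rightarrow> bool \<times> (('s,'p) kripke \<Rightarrow> 's set)" where
  "val Prop L PN \<phi> = (is_P_formula Prop L \<phi>, restrict (\<lambda>K. {q\<in>states K. state_sat K q (read_ltl \<phi>)}) PN)"

lemma val_eqD: "val Prop L PN a = val Prop L PN b \<Longrightarrow> K\<in>PN \<Longrightarrow> q\<in>states K \<Longrightarrow>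
   state_sat K q (read_ltl a) = state_sat K q (read_ltl b)"
proof -
  assume "val Prop L PN a = val Prop L PN b" "K\<in>PN" "q\<in>states K"
  then have "restrict (\<lambda>K. {q\<in>states K. state_sat K q (read_ltl a)}) PN K = restrict (\<lambda>K. {q\<in>states K. state_sat K q (read_ltl b)}) PN K"
    by (simp add: val_def)
  then have "{q\<in>states K. state_sat K q (read_ltl a)} = {q\<in>states K. state_sat K q (read_ltl b)}"
    using \<open>K\<in>PN\<close> by simp
  then show ?thesis using \<open>q\<in>states K\<close> by blast
qed

lemma val_eqI: "is_P_formula Prop L a = is_P_formula Prop L b \<Longrightarrow>
  (\<And>K q. K\<in>PN \<Longrightarrow> q\<in>states K \<Longrightarrow> state_sat K q (read_ltl a) = state_sat K q (read_ltl b)) \<Longrightarrow>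
  val Prop L PN a = val Prop L PN b"
proof -
  assume a: "is_P_formula Prop L a = is_P_formula Prop L b" and
    b: "\<And>K q. K\<in>PN \<Longrightarrow> q\<in>states K \<Longrightarrow> state_sat K q (read_ltl a) = state_sat K q (read_ltl b)"
  have "restrict (\<lambda>K. {q\<in>states K. state_sat K q (read_ltl a)}) PN = restrict (\<lambda>K. {q\<in>states K. state_sat K q (read_ltl b)}) PN"
  proof (rule restrict_ext)
    fix K assume "K \<in> PN"
    then show "{q\<in>states K. state_sat K q (read_ltl a)} = {q\<in>states K. state_sat K q (read_ltl b)}"
      using b by blast
  qed
  then show ?thesis using a unfolding val_def by simp
qed

lemma val_fst: "val Prop L PN a = val Prop L PN b \<Longrightarrow> is_P_formula Prop L a = is_P_formula Prop L b"
  by (simp add: val_def)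

definition good :: "'p set \<Rightarrow> 'p ltlp_op set \<Rightarrow> ('s,'p) kripke set \<Rightarrow> 'p ltlp set \<Rightarrow> bool" where
  "good Prop L PN D \<longleftrightarrow> (\<forall>\<psi>\<in>D. subformulas \<psi> \<subseteq> D) \<and> inj_on (val Prop L PN) D \<and> D \<subseteq> Collect (is_G_formula Prop L)"

lemma good_empty: "good Prop L PN {}" by (simp add: good_def)

lemma step:
  assumes g: "good Prop L PN D" and s: "subformulas \<chi> \<subseteq> insert \<chi> D" and G: "is_G_formula Prop L \<chi>"
  shows "\<exists>D' \<phi>'. D \<subseteq> D' \<and> good Prop L PN D' \<and> \<phi>' \<in> D' \<and> val Prop L PN \<phi>' = val Prop L PN \<chi>"
proof (cases "\<exists>\<psi>\<in>D. val Prop L PN \<psi> = val Prop L PN \<chi>")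
  case True
  then show ?thesis using g by blast
next
  case False
  have "good Prop L PN (insert \<chi> D)"
    using g s G False unfolding good_def by (auto simp: inj_on_insert)
  then show ?thesis by blast
qed

lemma case1:
  assumes IH: "\<And>D. good Prop L PN D \<Longrightarrow> \<exists>D' \<phi>'. D \<subseteq> D' \<and> good Prop L PN D' \<and> \<phi>' \<in> D' \<and> val Prop L PN \<phi>' = val Prop L PN a"
    and g: "good Prop L PN D"
    and c: "\<And>a'. val Prop L PN a' = val Prop L PN a \<Longrightarrow> is_G_formula Prop L a' \<Longrightarrow>
       is_G_formula Prop L (C a') \<and> val Prop L PN (C a') = val Prop L PN (C a)"
    and sf: "\<And>x. subformulas (C x) = insert (C x) (subformulas x)"
  shows "\<exists>D' \<phi>'. D \<subseteq> D' \<and> good Prop L PN D' \<and> \<phi>' \<in> D' \<and> val Prop L PN \<phi>' = val Prop L PN (C a)"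
proof -
  obtain D1 a' where 1: "D \<subseteq> D1" "good Prop L PN D1" "a' \<in> D1" "val Prop L PN a' = val Prop L PN a"
    using IH[OF g] by blast
  have Ga: "is_G_formula Prop L a'" using 1 unfolding good_def by auto
  have sub: "subformulas (C a') \<subseteq> insert (C a') D1" using 1 unfolding good_def sf by auto
  obtain D' \<phi>' where 2: "D1 \<subseteq> D'" "good Prop L PN D'" "\<phi>' \<in> D'" "val Prop L PN \<phi>' = val Prop L PN (C a')"
    using step[OF 1(2) sub] c[OF 1(4) Ga] by blast
  show ?thesis using 1 2 c[OF 1(4) Ga] by (intro exI[of _ D'] exI[of _ \<phi>']) auto
qed

lemma case2:
  assumes IHa: "\<And>D. good Prop L PN D \<Longrightarrow> \<exists>D' \<phi>'. D \<subseteq> D' \<and> good Prop L PN D' \<and> \<phi>' \<in> D' \<and> val Prop L PN \<phi>' = val Prop L PN a"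
    and IHb: "\<And>D. good Prop L PN D \<Longrightarrow> \<exists>D' \<phi>'. D \<subseteq> D' \<and> good Prop L PN D' \<and> \<phi>' \<in> D' \<and> val Prop L PN \<phi>' = val Prop L PN b"
    and g: "good Prop L PN D"
    and c: "\<And>a' b'. val Prop L PN a' = val Prop L PN a \<Longrightarrow> val Prop L PN b' = val Prop L PN b \<Longrightarrow>
       is_G_formula Prop L a' \<Longrightarrow> is_G_formula Prop L b' \<Longrightarrow>
       is_G_formula Prop L (C a' b') \<and> val Prop L PN (C a' b') = val Prop L PN (C a b)"
    and sf: "\<And>x y. subformulas (C x y) = insert (C x y) (subformulas x \<union> subformulas y)"
  shows "\<exists>D' \<phi>'. D \<subseteq> D' \<and> good Prop L PN D' \<and> \<phi>' \<in> D' \<and> val Prop L PN \<phi>' = val Prop L PN (C a b)"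
proof -
  obtain D1 a' where 1: "D \<subseteq> D1" "good Prop L PN D1" "a' \<in> D1" "val Prop L PN a' = val Prop L PN a"
    using IHa[OF g] by blast
  obtain D2 b' where 2: "D1 \<subseteq> D2" "good Prop L PN D2" "b' \<in> D2" "val Prop L PN b' = val Prop L PN b"
    using IHb[OF 1(2)] by blast
  have a2: "a' \<in> D2" using 1 2 by auto
  have Ga: "is_G_formula Prop L a'" "is_G_formula Prop L b'" using a2 2 unfolding good_def by auto
  have sub: "subformulas (C a' b') \<subseteq> insert (C a' b') D2" using a2 2 unfolding good_def sf by auto
  obtain D' \<phi>' where 3: "D2 \<subseteq> D'" "good Prop L PN D'" "\<phi>' \<in> D'" "val Prop L PN \<phi>' = val Prop L PN (C a' b')"
    using step[OF 2(2) sub] c[OF 1(4) 2(4) Ga] by blast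
  show ?thesis using 1 2 3 c[OF 1(4) 2(4) Ga] by (intro exI[of _ D'] exI[of _ \<phi>']) auto
qed

lemma pathval: "val Prop L PN a' = val Prop L PN a \<Longrightarrow> K\<in>PN \<Longrightarrow> wfk K \<Longrightarrow> q \<in> states K \<Longrightarrow> \<rho> \<in> paths K q \<Longrightarrow>
   state_sat K (\<rho> j) (read_ltl a') = state_sat K (\<rho> j) (read_ltl a)"
  using val_eqD path_in by metis

lemma main:
  assumes wf: "\<forall>K\<in>PN. wfk K"
  shows "is_G_formula Prop L \<phi> \<Longrightarrow> good Prop L PN D \<Longrightarrow>
    \<exists>D' \<phi>'. D \<subseteq> D' \<and> good Prop L PN D' \<and> \<phi>' \<in> D' \<and> val Prop L PN \<phi>' = val Prop L PN \<phi>"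
proof (induction \<phi> arbitrary: D)
  case (PAtom p)
  then show ?case using step[of Prop L PN D "PAtom p"] by auto
next
  case (PNot a)
  show ?case
  proof (rule case1[where C=PNot])
    show "good Prop L PN D" by fact
    show "\<And>D. good Prop L PN D \<Longrightarrow> \<exists>D' \<phi>'. D \<subseteq> D' \<and> good Prop L PN D' \<and> \<phi>' \<in> D' \<and> val Prop L PN \<phi>' = val Prop L PN a"
      by (rule PNot.IH(1)) (use PNot.prems in \<open>auto simp: isP_isG\<close>)
    fix a' assume v: "val Prop L PN a' = val Prop L PN a" and "is_G_formula Prop L a'"
    have P: "is_P_formula Prop L a' = is_P_formula Prop L a" using val_fst[OF v] .
    have Pa: "is_P_formula Prop L a" "ONot \<in> L" using PNot.prems by simp_all
    show "is_G_formula Prop L (PNot a') \<and> val Prop L PN (PNot a') = val Prop L PN (PNot a)"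
    proof
      show "is_G_formula Prop L (PNot a')" using P Pa by simp
      show "val Prop L PN (PNot a') = val Prop L PN (PNot a)"
      proof (rule val_eqI)
        show "is_P_formula Prop L (PNot a') = is_P_formula Prop L (PNot a)" using P by simp
        fix K q assume K: "K \<in> PN" "q \<in> states K"
        obtain \<rho> where r: "\<rho> \<in> paths K q" using path_ex[OF bspec[OF wf K(1)] K(2)] by (elim exE)
        show "state_sat K q (read_ltl (PNot a')) = state_sat K q (read_ltl (PNot a))"
        proof -
          have l1: "lprop (read_ltl a)" using isP_lprop Pa(1) .
          have l2: "lprop (read_ltl a')" using isP_lprop P Pa(1) by simp
          have e1: "state_sat K q (LNot (read_ltl a')) = (\<not> state_sat K q (read_ltl a'))" by (rule sat_Not[OF l2 r])
          have e2: "state_sat K q (LNot (read_ltl a)) = (\<not> state_sat K q (read_ltl a))" by (rule sat_Not[OF l1 r])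
          have e3: "state_sat K q (read_ltl a') = state_sat K q (read_ltl a)" by (rule val_eqD[OF v K])
          show ?thesis using e1 e2 e3 by simp
        qed
      qed
    qed
  qed simp
next
  case (PAnd a b)
  show ?case
  proof (rule case2[where C=PAnd])
    show "good Prop L PN D" by fact
    show "\<And>D. good Prop L PN D \<Longrightarrow> \<exists>D' \<phi>'. D \<subseteq> D' \<and> good Prop L PN D' \<and> \<phi>' \<in> D' \<and> val Prop L PN \<phi>' = val Prop L PN a"
      by (rule PAnd.IH(1)) (use PAnd.prems in \<open>auto simp: isP_isG\<close>)
    show "\<And>D. good Prop L PN D \<Longrightarrow> \<exists>D' \<phi>'. D \<subseteq> D' \<and> good Prop L PN D' \<and> \<phi>' \<in> D' \<and> val Prop L PN \<phi>' = val Prop L PN b"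
      by (rule PAnd.IH(2)) (use PAnd.prems in \<open>auto simp: isP_isG\<close>)
    fix a' b' assume va: "val Prop L PN a' = val Prop L PN a" and vb: "val Prop L PN b' = val Prop L PN b"
    have P: "is_P_formula Prop L a' = is_P_formula Prop L a" "is_P_formula Prop L b' = is_P_formula Prop L b"
      using val_fst[OF va] val_fst[OF vb] .
    show "is_G_formula Prop L (PAnd a' b') \<and> val Prop L PN (PAnd a' b') = val Prop L PN (PAnd a b)"
      using PAnd.prems P by (auto intro!: val_eqI simp: sat_And val_eqD[OF va] val_eqD[OF vb])
  qed simp
next
  case (POr a b)
  show ?case
  proof (rule case2[where C=POr])
    show "good Prop L PN D" by fact
    show "\<And>D. good Prop L PN D \<Longrightarrow> \<exists>D' \<phi>'. D \<subseteq> D' \<and> good Prop L PN D' \<and> \<phi>' \<in> D' \<and> val Prop L PN \<phi>' = val Prop L PN a"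
      by (rule POr.IH(1)) (use POr.prems in \<open>auto simp: isP_isG\<close>)
    show "\<And>D. good Prop L PN D \<Longrightarrow> \<exists>D' \<phi>'. D \<subseteq> D' \<and> good Prop L PN D' \<and> \<phi>' \<in> D' \<and> val Prop L PN \<phi>' = val Prop L PN b"
      by (rule POr.IH(2)) (use POr.prems in \<open>auto simp: isP_isG\<close>)
    fix a' b' assume va: "val Prop L PN a' = val Prop L PN a" and vb: "val Prop L PN b' = val Prop L PN b"
    have P: "is_P_formula Prop L a' = is_P_formula Prop L a" "is_P_formula Prop L b' = is_P_formula Prop L b"
      using val_fst[OF va] val_fst[OF vb] .
    have l: "lprop (read_ltl a)" "lprop (read_ltl a')" using POr.prems P isP_lprop by auto
    show "is_G_formula Prop L (POr a' b') \<and> val Prop L PN (POr a' b') = val Prop L PN (POr a b)"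
      using POr.prems P by (auto intro!: val_eqI simp: sat_Or[OF l(1)] sat_Or[OF l(2)] val_eqD[OF va] val_eqD[OF vb])
  qed simp
next
  case (GAnd a b)
  show ?case
  proof (rule case2[where C=GAnd])
    show "good Prop L PN D" by fact
    show "\<And>D. good Prop L PN D \<Longrightarrow> \<exists>D' \<phi>'. D \<subseteq> D' \<and> good Prop L PN D' \<and> \<phi>' \<in> D' \<and> val Prop L PN \<phi>' = val Prop L PN a"
      by (rule GAnd.IH(1)) (use GAnd.prems in \<open>auto simp: isP_isG\<close>)
    show "\<And>D. good Prop L PN D \<Longrightarrow> \<exists>D' \<phi>'. D \<subseteq> D' \<and> good Prop L PN D' \<and> \<phi>' \<in> D' \<and> val Prop L PN \<phi>' = val Prop L PN b"
      by (rule GAnd.IH(2)) (use GAnd.prems in \<open>auto simp: isP_isG\<close>)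
    fix a' b' assume va: "val Prop L PN a' = val Prop L PN a" and vb: "val Prop L PN b' = val Prop L PN b"
      and "is_G_formula Prop L a'" "is_G_formula Prop L b'"
    then show "is_G_formula Prop L (GAnd a' b') \<and> val Prop L PN (GAnd a' b') = val Prop L PN (GAnd a b)"
      using GAnd.prems by (auto intro!: val_eqI simp: sat_And val_eqD[OF va] val_eqD[OF vb])
  qed simp
next
  case (GOr a b)
  show ?case
  proof (rule case2[where C=GOr])
    show "good Prop L PN D" by fact
    show "\<And>D. good Prop L PN D \<Longrightarrow> \<exists>D' \<phi>'. D \<subseteq> D' \<and> good Prop L PN D' \<and> \<phi>' \<in> D' \<and> val Prop L PN \<phi>' = val Prop L PN a"
      by (rule GOr.IH(1)) (use GOr.prems in \<open>auto simp: isP_isG\<close>)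
    show "\<And>D. good Prop L PN D \<Longrightarrow> \<exists>D' \<phi>'. D \<subseteq> D' \<and> good Prop L PN D' \<and> \<phi>' \<in> D' \<and> val Prop L PN \<phi>' = val Prop L PN b"
      by (rule GOr.IH(2)) (use GOr.prems in \<open>auto simp: isP_isG\<close>)
    fix a' b' assume va: "val Prop L PN a' = val Prop L PN a" and vb: "val Prop L PN b' = val Prop L PN b"
      and "is_G_formula Prop L a'" "is_G_formula Prop L b'"
    moreover have P: "is_P_formula Prop L a' = is_P_formula Prop L a"
      using val_fst[OF va] .
    moreover have l: "lprop (read_ltl a)" "lprop (read_ltl a')" using GOr.prems P isP_lprop by auto
    ultimately show "is_G_formula Prop L (GOr a' b') \<and> val Prop L PN (GOr a' b') = val Prop L PN (GOr a b)"
      using GOr.prems by (auto intro!: val_eqI simp: sat_Or[OF l(1)] sat_Or[OF l(2)] val_eqD[OF va] val_eqD[OF vb])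
  qed simp
next
  case (GX a)
  show ?case
  proof (rule case1[where C=GX])
    show "good Prop L PN D" by fact
    show "\<And>D. good Prop L PN D \<Longrightarrow> \<exists>D' \<phi>'. D \<subseteq> D' \<and> good Prop L PN D' \<and> \<phi>' \<in> D' \<and> val Prop L PN \<phi>' = val Prop L PN a"
      by (rule GX.IH(1)) (use GX.prems in \<open>auto simp: isP_isG\<close>)
    fix a' assume v: "val Prop L PN a' = val Prop L PN a" and "is_G_formula Prop L a'"
    then show "is_G_formula Prop L (GX a') \<and> val Prop L PN (GX a') = val Prop L PN (GX a)"
      using GX.prems wf by (auto intro!: val_eqI simp: sat_X pathval[OF v])
  qed simp
next
  case (GG a)
  show ?case
  proof (rule case1[where C=GG])
    show "good Prop L PN D" by fact
    show "\<And>D. good Prop L PN D \<Longrightarrow> \<exists>D' \<phi>'. D \<subseteq> D' \<and> good Prop L PN D' \<and> \<phi>' \<in> D' \<and> val Prop L PN \<phi>' = val Prop L PN a"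
      by (rule GG.IH(1)) (use GG.prems in \<open>auto simp: isP_isG\<close>)
    fix a' assume v: "val Prop L PN a' = val Prop L PN a" and "is_G_formula Prop L a'"
    then show "is_G_formula Prop L (GG a') \<and> val Prop L PN (GG a') = val Prop L PN (GG a)"
      using GG.prems wf by (auto intro!: val_eqI simp: sat_G pathval[OF v])
  qed simp
next
  case (GF a)
  show ?case
  proof (rule case1[where C=GF])
    show "good Prop L PN D" by fact
    show "\<And>D. good Prop L PN D \<Longrightarrow> \<exists>D' \<phi>'. D \<subseteq> D' \<and> good Prop L PN D' \<and> \<phi>' \<in> D' \<and> val Prop L PN \<phi>' = val Prop L PN a"
      by (rule GF.IH(1)) (use GF.prems in \<open>auto simp: isP_isG\<close>)
    fix a' assume v: "val Prop L PN a' = val Prop L PN a" and "is_G_formula Prop L a'"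
    moreover have P: "is_P_formula Prop L a' = is_P_formula Prop L a"
      using val_fst[OF v] .
    moreover have l: "lprop (read_ltl a)" "lprop (read_ltl a')" using GF.prems P isP_lprop by auto
    ultimately show "is_G_formula Prop L (GF a') \<and> val Prop L PN (GF a') = val Prop L PN (GF a)"
      using GF.prems wf by (auto intro!: val_eqI simp: sat_F[OF l(1)] sat_F[OF l(2)] pathval[OF v])
  qed simp
next
  case (GU a b)
  show ?case
  proof (rule case2[where C=GU])
    show "good Prop L PN D" by fact
    show "\<And>D. good Prop L PN D \<Longrightarrow> \<exists>D' \<phi>'. D \<subseteq> D' \<and> good Prop L PN D' \<and> \<phi>' \<in> D' \<and> val Prop L PN \<phi>' = val Prop L PN a"
      by (rule GU.IH(1)) (use GU.prems in \<open>auto simp: isP_isG\<close>)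
    show "\<And>D. good Prop L PN D \<Longrightarrow> \<exists>D' \<phi>'. D \<subseteq> D' \<and> good Prop L PN D' \<and> \<phi>' \<in> D' \<and> val Prop L PN \<phi>' = val Prop L PN b"
      by (rule GU.IH(2)) (use GU.prems in \<open>auto simp: isP_isG\<close>)
    fix a' b' assume va: "val Prop L PN a' = val Prop L PN a" and vb: "val Prop L PN b' = val Prop L PN b"
      and "is_G_formula Prop L a'" "is_G_formula Prop L b'"
    moreover have P: "is_P_formula Prop L b' = is_P_formula Prop L b"
      using val_fst[OF vb] .
    moreover have l: "lprop (read_ltl b)" "lprop (read_ltl b')" using GU.prems P isP_lprop by auto
    ultimately show "is_G_formula Prop L (GU a' b') \<and> val Prop L PN (GU a' b') = val Prop L PN (GU a b)"
      using GU.prems wf by (auto intro!: val_eqI simp: sat_U[OF l(1)] sat_U[OF l(2)] pathval[OF va] pathval[OF vb])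
  qed simp
qed

lemma val_in: "val Prop L PN \<psi> \<in> (UNIV::bool set) \<times> (\<Pi>\<^sub>E K\<in>PN. Pow (states K))"
  unfolding val_def by (simp add: restrict_PiE_iff)

theorem corollary3:
  fixes Prop :: "'p set" and L :: "'p ltlp_op set"
    and Pos Neg :: "('s, 'p) kripke set"
  assumes "finite Prop" and "Prop \<noteq> {}"
    and "L \<subseteq> ltlp_ops Prop"
    and "finite Pos" and "finite Neg"
    and "\<forall>K\<in>Pos \<union> Neg. in_T Prop K"
    and "\<exists>\<phi>. is_L_formula Prop L \<phi> \<and> separating Pos Neg \<phi>"
  shows "\<exists>\<phi>. is_L_formula Prop L \<phi> \<and> separating Pos Neg \<phi> \<and>
           sz \<phi> \<le> 2 ^ ((\<Sum>K\<in>Pos \<union> Neg. card (states K)) + 1)"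
proof -
  define PN where "PN = Pos \<union> Neg"
  have inT: "\<And>K. K\<in>PN \<Longrightarrow> in_T Prop K" using assms(6) unfolding PN_def by simp
  have wf: "\<forall>K\<in>PN. wfk K"
  proof
    fix K assume "K \<in> PN" then show "wfk K" by (rule inT_wfk[OF inT])
  qed
  obtain \<phi>0 where p0: "is_L_formula Prop L \<phi>0" "separating Pos Neg \<phi>0" using assms(7) by (elim exE conjE)
  have G0: "is_G_formula Prop L \<phi>0" using p0(1) unfolding is_L_formula_def .
  obtain D' \<phi>' where M: "{} \<subseteq> D'" "good Prop L PN D'" "\<phi>' \<in> D'" "val Prop L PN \<phi>' = val Prop L PN \<phi>0"
    using main[OF wf G0 good_empty] by (elim exE conjE)
  have gD1: "\<forall>\<psi>\<in>D'. subformulas \<psi> \<subseteq> D'" using M(2) unfolding good_def by (elim conjE)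
  have gD2: "inj_on (val Prop L PN) D'" using M(2) unfolding good_def by (elim conjE)
  have gD3: "D' \<subseteq> Collect (is_G_formula Prop L)" using M(2) unfolding good_def by (elim conjE)
  have L': "is_L_formula Prop L \<phi>'" using gD3 M(3) unfolding is_L_formula_def by (simp add: subset_iff)
  have ks: "kripke_sat K (read_ltl \<phi>') = kripke_sat K (read_ltl \<phi>0)" if K: "K\<in>PN" for K
  proof -
    have sub: "init K \<subseteq> states K" using inT[OF K] unfolding in_T_def by simp
    have "state_sat K q (read_ltl \<phi>') = state_sat K q (read_ltl \<phi>0)" if "q \<in> init K" for q
      using val_eqD[OF M(4) K] subsetD[OF sub that] by simp
    then show ?thesis unfolding kripke_sat_def by simp
  qed
  have sep: "separating Pos Neg \<phi>'" using p0(2) ks unfolding separating_def PN_def by simp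
  define V where "V = (UNIV::bool set) \<times> (\<Pi>\<^sub>E K\<in>PN. Pow (states K))"
  have fin: "finite PN" using assms(4,5) unfolding PN_def by simp
  have finS: "\<And>K. K \<in> PN \<Longrightarrow> finite (Pow (states K))" using inT unfolding in_T_def by simp
  have finV: "finite V" unfolding V_def
    by (intro finite_cartesian_product finite_PiE fin finS) simp_all
  have "card V = 2 * (\<Prod>K\<in>PN. card (Pow (states K)))"
    unfolding V_def card_cartesian_product card_PiE[OF fin] by simp
  also have "\<dots> = 2 * (\<Prod>K\<in>PN. 2 ^ card (states K))"
    using inT unfolding in_T_def by (simp add: card_Pow)
  also have "\<dots> = 2 ^ ((\<Sum>K\<in>PN. card (states K)) + 1)"
    by (simp add: power_sum)
  finally have cardV: "card V = 2 ^ ((\<Sum>K\<in>PN. card (states K)) + 1)" .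
  have sub: "subformulas \<phi>' \<subseteq> D'" using gD1 M(3) by simp
  have inj: "inj_on (val Prop L PN) (subformulas \<phi>')" using inj_on_subset[OF gD2 sub] .
  have img: "val Prop L PN ` subformulas \<phi>' \<subseteq> V" unfolding V_def using val_in by blast
  have "sz \<phi>' \<le> card V" unfolding sz_def by (rule card_inj_on_le[OF inj img finV])
  then show ?thesis using L' sep cardV unfolding PN_def by auto
qed

end
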